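(* Let $p$ be a prime, let $\chi$ be a Dirichlet character, and let $y$ be a positive integer. If $\prod_{n=1}^y|1+\chi(n)|>2^y/p^2$, then the number of integers $n\in\{1,\dots,y\}$ such that $|\chi(n)-1|>1/\log p$ is less than $16(\log p)^3$. *)

theory Defs
  imports Complex_Main "HOL-Computational_Algebra.Primes"
begin

definition dirichlet_character :: "nat \<Rightarrow> (nat \<Rightarrow> complex) \<Rightarrow> bool" where
  "dirichlet_character q \<chi> \<longleftrightarrow>
     q > 0 \<and> \<chi> 1 = 1 \<and>
     (\<forall>m n. \<chi> (m * n) = \<chi> m * \<chi> n) \<and>
     (\<forall>n. \<chi> (n + q) = \<chi> n) \<and>
     (\<forall>n. \<chi> n = 0 \<longleftrightarrow> \<not> coprime n q)"

end

theory Submission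
  imports Defs "HOL-Number_Theory.Number_Theory"
begin

lemma par: "(cmod (1 + z))^2 + (cmod (z - 1))^2 = 2 + 2 * (cmod z)^2"
  unfolding cmod_power2 by (simp add: power2_eq_square algebra_simps)

lemma per: fixes \<chi> :: "nat \<Rightarrow> 'a" and q m :: nat
  assumes "\<forall>n. \<chi> (n + q) = \<chi> n" shows "\<chi> (m mod q) = \<chi> m"
proof -
  have "\<chi> (r + k*q) = \<chi> r" for r k :: nat
  proof (induction k)
    case (Suc k)
    have "\<chi> (r + Suc k * q) = \<chi> ((r + k*q) + q)" by (simp add: algebra_simps)
    also have "\<dots> = \<chi> (r + k*q)" using assms by blast
    also have "\<dots> = \<chi> r" by (rule Suc.IH)
    finally show ?case .
  qed simp
  from this[of "m mod q" "m div q"] show ?thesis by simp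
qed

lemma pw: assumes "\<chi> 1 = 1" "\<forall>m n. \<chi> (m * n) = \<chi> m * \<chi> n" shows "\<chi> (n^k) = \<chi> n ^ k"
  using assms by (induction k) auto

lemma unit: assumes "dirichlet_character q \<chi>" "coprime n q" shows "cmod (\<chi> n) = 1"
proof -
  have q: "q > 0" "\<chi> 1 = 1" "\<forall>m n. \<chi> (m * n) = \<chi> m * \<chi> n" "\<forall>n. \<chi> (n + q) = \<chi> n"
    using assms(1) unfolding dirichlet_character_def by auto
  let ?t = "totient q"
  have "[n ^ ?t = 1] (mod q)" using euler_theorem[OF assms(2)] .
  hence "n ^ ?t mod q = 1 mod q" by (simp add: cong_def)
  hence "\<chi> (n ^ ?t) = 1" using per[OF q(4)] q(2) by metis
  hence "\<chi> n ^ ?t = 1" using pw[OF q(2) q(3)] by simp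
  hence "cmod (\<chi> n) ^ ?t = 1" by (metis norm_one norm_power)
  moreover have "?t > 0" using q(1) by simp
  ultimately show ?thesis
  proof -
    assume h: "cmod (\<chi> n) ^ ?t = 1" "?t > 0"
    have "\<not> cmod (\<chi> n) < 1"
    proof
      assume "cmod (\<chi> n) < 1"
      then have "cmod (\<chi> n) ^ ?t < 1" using h(2) by (simp add: power_less_one_iff)
      then show False using h(1) by simp
    qed
    moreover have "\<not> cmod (\<chi> n) > 1"
    proof
      assume "cmod (\<chi> n) > 1"
      then have "cmod (\<chi> n) ^ ?t > 1" using h(2) by (simp add: one_less_power)
      then show False using h(1) by simp
    qed
    ultimately show ?thesis by linarith
  qed
qed

lemma vals: assumes "dirichlet_character q \<chi>" shows "\<chi> n = 0 \<or> cmod (\<chi> n) = 1"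
  using unit[OF assms] assms unfolding dirichlet_character_def by blast

theorem lemma4p3:
  fixes p q y :: nat and \<chi> :: "nat \<Rightarrow> complex"
  assumes "prime p"
    and "dirichlet_character q \<chi>"
    and "y > 0"
    and "(\<Prod>n=1..y. cmod (1 + \<chi> n)) > 2 ^ y / (real p) ^ 2"
  shows "real (card {n \<in> {1..y}. cmod (\<chi> n - 1) > 1 / ln (real p)}) < 16 * (ln (real p)) ^ 3"
proof -
  define L where "L = ln (real p)"
  define d where "d = 1 / L"
  define A where "A = {1..y}"
  define B where "B = {n \<in> {1..y}. cmod (\<chi> n - 1) > 1 / ln (real p)}"
  define N where "N = card B"
  have p2: "real p \<ge> 2" using prime_ge_2_nat[OF assms(1)] by simp
  have Lpos: "L > 0" unfolding L_def using p2 by simp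
  have dpos: "d > 0" unfolding d_def using Lpos by simp
  have BA: "B \<subseteq> A" unfolding A_def B_def by auto
  have finA: "finite A" unfolding A_def by simp
  have Bd: "n \<in> B \<Longrightarrow> cmod (\<chi> n - 1) > d" for n unfolding B_def d_def L_def by simp
  show ?thesis
  proof (cases "B = {}")
    case True
    then show ?thesis using Lpos unfolding B_def[symmetric] L_def by simp
  next
    case False
    define c where "c = 1 -(d^2)/4"
    have hb: "(cmod (1 + \<chi> n))^2 \<le> 4 * c \<and> 0 < c" if "n \<in> B" for n
    proof (cases "\<chi> n = 0")
      case True
      then have "d < 1" using Bd[OF that] by simp
      then have "d^2 < 1" using dpos by (simp add: power_less_one_iff)
      then show ?thesis using True unfolding c_def by simp
    next
      case False
      then have u: "cmod (\<chi> n) = 1" using vals[OF assms(2)] by blast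
      have "d^2 < (cmod (\<chi> n - 1))^2" using Bd[OF that] dpos
        by (simp add: power_strict_mono)
      moreover have "(cmod (1 + \<chi> n))^2 + (cmod (\<chi> n - 1))^2 = 4" using par[of "\<chi> n"] u by simp
      moreover have "(cmod (1 + \<chi> n))^2 \<ge> 0" by simp
      moreover have "4 * c = 4 - d^2" "c = 1 -(d^2)/4" unfolding c_def by simp_all
      ultimately show ?thesis by linarith
    qed
    have ha: "(cmod (1 + \<chi> n))^2 \<le> 4" for n
    proof -
      have "cmod (\<chi> n) \<le> 1" using vals[OF assms(2), of n] by auto
      then have "cmod (1 + \<chi> n) \<le> 2" using norm_triangle_ineq[of 1 "\<chi> n"] by simp
      then show ?thesis using power_mono[of "cmod (1 + \<chi> n)" 2 2] by simp
    qed
    from False obtain b where "b \<in> B" by blast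
    then have cpos: "c > 0" using hb by blast
    define P where "P = (\<Prod>n\<in>A. cmod (1 + \<chi> n))"
    have pp: "real p ^ 2 > 0" using p2 by simp
    have "P > 2 ^ y / (real p) ^ 2" using assms(4) unfolding P_def A_def .
    moreover have "2 ^ y / (real p) ^ 2 > 0" using pp by simp
    ultimately have "P^2 > (2 ^ y / (real p) ^ 2)^2" by (simp add: power_strict_mono)
    also have "(2 ^ y / (real p) ^ 2)^2 = 4^y / (real p)^4"
    proof -
      have "(2::real)^(y*2) = 4^y" by (subst mult.commute) (simp add: power_mult)
      then show ?thesis by (simp add: power_divide flip: power_mult power_mult_distrib)
    qed
    finally have lo: "4^y / (real p)^4 < P^2" .
    have "P^2 = (\<Prod>n\<in>A. (cmod (1 + \<chi> n))^2)" unfolding P_def by (simp add: prod_power_distrib)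
    also have "\<dots> \<le> (\<Prod>n\<in>A. 4 * (if n \<in> B then c else 1))"
      by (rule prod_mono) (use hb ha in auto)
    also have "\<dots> = 4^y * c^N"
    proof -
      have "(\<Prod>n\<in>A. 4 * (if n \<in> B then c else 1)) = (\<Prod>n\<in>A. (4::real)) * (\<Prod>n\<in>A. (if n \<in> B then c else 1))"
        by (rule prod.distrib)
      also have "(\<Prod>n\<in>A. (if n \<in> B then c else 1)) = c ^ N"
      proof -
        have "(\<Prod>n\<in>A. (if n \<in> B then c else (1::real))) = (\<Prod>n\<in>B. c)"
          using prod.mono_neutral_cong_right[OF finA BA, of "\<lambda>n. if n \<in> B then c else 1" "\<lambda>_. c"] by simp
        then show ?thesis unfolding N_def by simp
      qed
      finally show ?thesis unfolding A_def by simp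
    qed
    finally have "4^y / (real p)^4 < 4^y * c^N" using lo by linarith
    then have "1 / (real p)^4 < c^N" using pp by (simp add: divide_less_eq mult.commute)
    also have "c^N \<le> exp (-(d^2)/4) ^ N"
      using cpos exp_ge_add_one_self[of "-(d^2)/4"] unfolding c_def
      by (intro power_mono) auto
    also have "\<dots> = exp (- (real N * d^2/4))" using exp_of_nat_mult[of N "-(d^2)/4"] by simp
    finally have "1 / (real p)^4 < exp (- (real N * d^2/4))" .
    moreover have "1 / (real p)^4 = exp (- 4 * L)" unfolding L_def
    proof -
      have pos: "real p ^ 4 > 0" "real p > 0" using p2 by auto
      have e: "ln (real p ^ 4) = 4 * ln (real p)" using ln_realpow[of "real p" 4] by simp
      have "exp (4 * ln (real p)) = real p ^ 4" 
        unfolding e[symmetric] using exp_ln[OF pos(1)] .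
      then show "1 / (real p)^4 = exp (- 4 * ln (real p))" by (simp add: exp_minus divide_inverse)
    qed
    ultimately have "- 4 * L < - (real N * d^2/4)" by simp
    then have "real N * d^2 < 16 * L" by simp
    then have "real N < 16 * L * L^2" unfolding d_def using Lpos by (simp add: field_simps)
    then show ?thesis unfolding N_def B_def L_def by (simp add: power3_eq_cube power2_eq_square mult.assoc)
  qed
qed

end
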